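(* Let $V$ be a real vector space and $X\subseteq V$ infinite. Then the join-semilattice of compact elements of $Co(V,X)$ contains a join-subsemilattice isomorphic to $Co^{<\omega}(\mathbb{N})$ or one isomorphic to $\mathcal{P}^{<\omega}(\mathbb{N})$.
   Context: $Co(V,X)$ is the lattice (under inclusion) of sets $C\cap X$ with $C$ convex in $V$; its compact elements are the sets $\mathrm{conv}(F)\cap X$ with $F\subseteq X$ finite, and they form a join-semilattice. $Co^{<\omega}(\mathbb{N})$ is the join-semilattice of finite intervals of the chain $\mathbb{N}$ ordered by inclusion, and $\mathcal{P}^{<\omega}(\mathbb{N})$ the join-semilattice of finite subsets of $\mathbb{N}$ ordered by inclusion. *)

theory Defs
  imports "HOL-Analysis.Analysis"
begin

text \<open>Compact elements of Co(V,X): sets conv(F) \<inter> X with F \<subseteq> X finite.\<close>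
definition Co_compact :: "'v::real_vector set \<Rightarrow> 'v set set" where
  "Co_compact X = {convex hull F \<inter> X | F. finite F \<and> F \<subseteq> X}"

text \<open>Join in the lattice Co(V,X): the least member containing both, i.e. conv(A \<union> B) \<inter> X.\<close>
definition Co_join :: "'v::real_vector set \<Rightarrow> 'v set \<Rightarrow> 'v set \<Rightarrow> 'v set" where
  "Co_join X A B = convex hull (A \<union> B) \<inter> X"

text \<open>Co^{<omega}(N): finite intervals (order-convex subsets) of the chain N, including the empty one.\<close>
definition fin_intervals_nat :: "nat set set" where
  "fin_intervals_nat = {{a..b} | a b. True} \<union> {{}}"

definition interval_join :: "nat set \<Rightarrow> nat set \<Rightarrow> nat set" where
  "interval_join I J = {n. \<exists>a\<in>I \<union> J. \<exists>b\<in>I \<union> J. a \<le> n \<and> n \<le> b}"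

definition fin_subsets_nat :: "nat set set" where
  "fin_subsets_nat = {A. finite A}"

text \<open>h embeds the join-semilattice (L, jL) onto a join-subsemilattice of (K, jK):
  injective, lands in K, and preserves joins (its image is then a join-subsemilattice
  isomorphic to L).\<close>
definition join_embedding ::
  "'a set \<Rightarrow> ('a \<Rightarrow> 'a \<Rightarrow> 'a) \<Rightarrow> 'b set \<Rightarrow> ('b \<Rightarrow> 'b \<Rightarrow> 'b) \<Rightarrow> ('a \<Rightarrow> 'b) \<Rightarrow> bool" where
  "join_embedding L jL K jK h \<longleftrightarrow>
     inj_on h L \<and> h ` L \<subseteq> K \<and> (\<forall>a\<in>L. \<forall>b\<in>L. h (jL a b) = jK (h a) (h b))"

end

theory Submission
  imports Defs "HOL-Library.Ramsey"
begin

definition CI :: "(nat \<Rightarrow> 'v::real_vector) \<Rightarrow> bool" where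
  "CI x \<longleftrightarrow> (\<forall>A n. finite A \<and> n \<notin> A \<longrightarrow> x n \<notin> convex hull (x ` A))"

definition LIN :: "(nat \<Rightarrow> 'v::real_vector) \<Rightarrow> bool" where
  "LIN x \<longleftrightarrow> (\<exists>p u \<tau>. u \<noteq> 0 \<and> strict_mono (\<tau>::nat\<Rightarrow>real) \<and> (\<forall>n. x n = p + \<tau> n *\<^sub>R u))"

lemma hull_union_eq:
  fixes X :: "'v::real_vector set"
  assumes "x ` A \<subseteq> X" "x ` B \<subseteq> X"
  shows "convex hull ((convex hull (x ` A) \<inter> X) \<union> (convex hull (x ` B) \<inter> X)) = convex hull (x ` A \<union> x ` B)"
proof (rule subset_antisym)
  show "convex hull (convex hull (x ` A) \<inter> X \<union> convex hull (x ` B) \<inter> X) \<subseteq> convex hull (x ` A \<union> x ` B)"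
    by (rule hull_minimal) (auto intro: hull_mono[THEN subsetD] simp: convex_convex_hull)
  show "convex hull (x ` A \<union> x ` B) \<subseteq> convex hull (convex hull (x ` A) \<inter> X \<union> convex hull (x ` B) \<inter> X)"
    apply (rule hull_mono) using assms by (auto intro: hull_inc)
qed

lemma inj_lemma:
  fixes X :: "'v::real_vector set"
  assumes "\<And>I n. I \<in> L \<Longrightarrow> x n \<in> convex hull (x ` I) \<Longrightarrow> n \<in> I" "\<And>n. x n \<in> X"
  shows "inj_on (\<lambda>I. convex hull (x ` I) \<inter> X) L"
proof (rule inj_onI)
  fix I J assume IJ: "I \<in> L" "J \<in> L" and eq: "convex hull (x ` I) \<inter> X = convex hull (x ` J) \<inter> X"
  have *: "n \<in> J" if "I \<in> L" "J \<in> L" "convex hull (x ` I) \<inter> X = convex hull (x ` J) \<inter> X" "n \<in> I" for I J n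
  proof -
    have "x n \<in> convex hull (x ` I) \<inter> X" using that assms(2) by (auto intro: hull_inc)
    then have "x n \<in> convex hull (x ` J)" using that by auto
    then show ?thesis using assms(1) that by blast
  qed
  show "I = J" using *[OF IJ eq] *[OF IJ(2,1) eq[symmetric]] by blast
qed

lemma embP:
  fixes X :: "'v::real_vector set"
  assumes "\<And>n. x n \<in> X" "CI x"
  shows "\<exists>h. join_embedding fin_subsets_nat (\<union>) (Co_compact X) (Co_join X) h"
proof (intro exI[of _ "\<lambda>A. convex hull (x ` A) \<inter> X"], unfold join_embedding_def, intro conjI ballI)
  show "inj_on (\<lambda>A. convex hull (x ` A) \<inter> X) fin_subsets_nat"
    by (rule inj_lemma) (use assms in \<open>auto simp: CI_def fin_subsets_nat_def\<close>)
  show "(\<lambda>A. convex hull (x ` A) \<inter> X) ` fin_subsets_nat \<subseteq> Co_compact X"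
    using assms(1) by (auto simp: Co_compact_def fin_subsets_nat_def)
  fix a b assume "a \<in> fin_subsets_nat" "b \<in> fin_subsets_nat"
  show "convex hull (x ` (a \<union> b)) \<inter> X = Co_join X (convex hull (x ` a) \<inter> X) (convex hull (x ` b) \<inter> X)"
    unfolding Co_join_def using assms(1) by (subst hull_union_eq) (auto simp: image_Un)
qed

lemma lin_between:
  fixes p u :: "'v::real_vector"
  assumes mono: "strict_mono (\<tau>::nat\<Rightarrow>real)" and ab: "a \<le> n" "n \<le> b"
  shows "p + \<tau> n *\<^sub>R u \<in> convex hull {p + \<tau> a *\<^sub>R u, p + \<tau> b *\<^sub>R u}"
proof (cases "a = b")
  case True then show ?thesis using ab by (auto intro: hull_inc)
next
  case False
  then have ab': "a < b" using ab by simp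
  have lt: "\<tau> a < \<tau> b" using mono ab' by (simp add: strict_mono_less)
  have le1: "\<tau> a \<le> \<tau> n" "\<tau> n \<le> \<tau> b" using mono ab by (auto simp: strict_mono_less_eq)
  define \<theta> where "\<theta> = (\<tau> n - \<tau> a) / (\<tau> b - \<tau> a)"
  have t0: "0 \<le> \<theta>" "\<theta> \<le> 1" using lt le1 by (auto simp: \<theta>_def field_simps)
  have h: "\<theta> * (\<tau> b - \<tau> a) = \<tau> n - \<tau> a" using lt by (simp add: \<theta>_def)
  have h2: "(1 - \<theta>) * \<tau> a + \<theta> * \<tau> b = \<tau> n" using h by (simp add: algebra_simps)
  have "(1 - \<theta>) *\<^sub>R (p + \<tau> a *\<^sub>R u) + \<theta> *\<^sub>R (p + \<tau> b *\<^sub>R u) = p + ((1 - \<theta>) * \<tau> a + \<theta> * \<tau> b) *\<^sub>R u"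
    by (simp add: algebra_simps)
  then have "p + \<tau> n *\<^sub>R u = (1 - \<theta>) *\<^sub>R (p + \<tau> a *\<^sub>R u) + \<theta> *\<^sub>R (p + \<tau> b *\<^sub>R u)"
    using h2 by simp
  then have "p + \<tau> n *\<^sub>R u \<in> closed_segment (p + \<tau> a *\<^sub>R u) (p + \<tau> b *\<^sub>R u)"
    using t0 by (auto simp: closed_segment_def)
  then show ?thesis by (simp add: segment_convex_hull)
qed

lemma lin_contain:
  fixes p u :: "'v::real_vector"
  assumes mono: "strict_mono (\<tau>::nat\<Rightarrow>real)" and u: "u \<noteq> 0"
    and mem: "p + \<tau> n *\<^sub>R u \<in> convex hull ((\<lambda>k. p + \<tau> k *\<^sub>R u) ` {a..b})"
  shows "a \<le> n \<and> n \<le> b"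
proof -
  let ?K = "{z. \<exists>s. \<tau> a \<le> s \<and> s \<le> \<tau> b \<and> z = p + s *\<^sub>R u}"
  have cK: "convex ?K"
  proof (unfold convex_def, intro ballI allI impI)
    fix z w and c d :: real assume "z \<in> ?K" "w \<in> ?K" and cd: "0 \<le> c" "0 \<le> d" "c + d = 1"
    then obtain s t where st: "\<tau> a \<le> s" "s \<le> \<tau> b" "z = p + s *\<^sub>R u" "\<tau> a \<le> t" "t \<le> \<tau> b" "w = p + t *\<^sub>R u" by auto
    have "c *\<^sub>R z + d *\<^sub>R w = p + (c * s + d * t) *\<^sub>R u"
      using cd st by (simp add: algebra_simps flip: scaleR_add_left)
    moreover have "\<tau> a \<le> c * s + d * t" "c * s + d * t \<le> \<tau> b"
    proof -
      have "c * \<tau> a + d * \<tau> a \<le> c * s + d * t" using cd st by (intro add_mono mult_left_mono) auto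
      then show "\<tau> a \<le> c * s + d * t" using cd by (simp add: algebra_simps flip: distrib_right)
      have "c * s + d * t \<le> c * \<tau> b + d * \<tau> b" using cd st by (intro add_mono mult_left_mono) auto
      then show "c * s + d * t \<le> \<tau> b" using cd by (simp add: algebra_simps flip: distrib_right)
    qed
    ultimately show "c *\<^sub>R z + d *\<^sub>R w \<in> ?K" by blast
  qed
  have "(\<lambda>k. p + \<tau> k *\<^sub>R u) ` {a..b} \<subseteq> ?K"
  proof
    fix z assume "z \<in> (\<lambda>k. p + \<tau> k *\<^sub>R u) ` {a..b}"
    then obtain k where k: "a \<le> k" "k \<le> b" "z = p + \<tau> k *\<^sub>R u" by auto
    show "z \<in> ?K" by (rule CollectI, rule exI[of _ "\<tau> k"]) (use k mono in \<open>auto simp: strict_mono_less_eq\<close>)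
  qed
  then have "convex hull ((\<lambda>k. p + \<tau> k *\<^sub>R u) ` {a..b}) \<subseteq> ?K"
    using cK by (rule hull_minimal)
  with mem obtain s where s: "\<tau> a \<le> s" "s \<le> \<tau> b" "p + \<tau> n *\<^sub>R u = p + s *\<^sub>R u" by blast
  then have "\<tau> n = s" using u by (simp add: scaleR_cancel_right)
  then show ?thesis using s mono by (metis strict_mono_less_eq)
qed

lemma embI:
  fixes X :: "'v::real_vector set"
  assumes X: "\<And>n. x n \<in> X" and L: "LIN x"
  shows "\<exists>h. join_embedding fin_intervals_nat interval_join (Co_compact X) (Co_join X) h"
proof -
  obtain p u \<tau> where u: "u \<noteq> 0" and mono: "strict_mono (\<tau>::nat\<Rightarrow>real)" and xe: "\<And>n. x n = p + \<tau> n *\<^sub>R u"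
    using L unfolding LIN_def by blast
  have xdef: "x = (\<lambda>k. p + \<tau> k *\<^sub>R u)" using xe by auto
  show ?thesis
  proof (intro exI[of _ "\<lambda>A. convex hull (x ` A) \<inter> X"], unfold join_embedding_def, intro conjI ballI)
    show "inj_on (\<lambda>A. convex hull (x ` A) \<inter> X) fin_intervals_nat"
    proof (rule inj_lemma[OF _ X])
      fix I n assume "I \<in> fin_intervals_nat" "x n \<in> convex hull (x ` I)"
      then obtain a b where "I = {a..b} \<or> I = {}" and mem: "x n \<in> convex hull (x ` I)"
        unfolding fin_intervals_nat_def by blast
      then have "I = {a..b}" by auto
      with mem lin_contain[OF mono u, of p n a b] show "n \<in> I" by (simp add: xdef)
    qed
    show "(\<lambda>A. convex hull (x ` A) \<inter> X) ` fin_intervals_nat \<subseteq> Co_compact X"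
      using X apply (auto simp: Co_compact_def fin_intervals_nat_def)
      by (rule exI[of _ "{}"]) simp
    fix I J assume "I \<in> fin_intervals_nat" "J \<in> fin_intervals_nat"
    have sub: "I \<union> J \<subseteq> interval_join I J" by (auto simp: interval_join_def)
    have "convex hull (x ` interval_join I J) = convex hull (x ` I \<union> x ` J)"
    proof (rule subset_antisym)
      show "convex hull (x ` interval_join I J) \<subseteq> convex hull (x ` I \<union> x ` J)"
      proof (rule hull_minimal, rule subsetI)
        fix z assume "z \<in> x ` interval_join I J"
        then obtain n a b where n: "z = x n" "a \<in> I \<union> J" "b \<in> I \<union> J" "a \<le> n" "n \<le> b"
          by (auto simp: interval_join_def)
        have "z \<in> convex hull {x a, x b}" using lin_between[OF mono n(4,5)] n(1) by (simp add: xdef)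
        also have "\<dots> \<subseteq> convex hull (x ` I \<union> x ` J)" using n by (intro hull_mono) auto
        finally show "z \<in> convex hull (x ` I \<union> x ` J)" .
      qed (rule convex_convex_hull)
      show "convex hull (x ` I \<union> x ` J) \<subseteq> convex hull (x ` interval_join I J)"
        using sub by (intro hull_mono) auto
    qed
    then show "convex hull (x ` interval_join I J) \<inter> X = Co_join X (convex hull (x ` I) \<inter> X) (convex hull (x ` J) \<inter> X)"
      unfolding Co_join_def using X by (subst hull_union_eq) auto
  qed
qed

definition ori :: "('v \<Rightarrow> real) \<Rightarrow> ('v \<Rightarrow> real) \<Rightarrow> (nat \<Rightarrow> 'v) \<Rightarrow> nat \<Rightarrow> nat \<Rightarrow> nat \<Rightarrow> real" where
  "ori f g x i j k = (f (x j) - f (x i)) * (g (x k) - g (x i)) - (g (x j) - g (x i)) * (f (x k) - f (x i))"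

lemma id1: "(fb - fa) * (gw - ga) - (gb - ga) * (fw - fa) = (fa - fw) * (gb - gw) - (ga - gw) * (fb - fw)"
  for fa fb fw ga gb gw :: real by algebra
lemma id2: "(fb - fa) * (gn - ga) - (gb - ga) * (fn - fa) = - ((fn - fa) * (gb - ga) - (gn - ga) * (fb - fa))"
  for fa fb fn ga gb gn :: real by algebra

lemma ci_core:
  fixes x :: "nat \<Rightarrow> 'v::real_vector" and f g :: "'v \<Rightarrow> real"
  assumes fa: "\<And>v w. f (v + w) = f v + f w" and fs: "\<And>c v. f (c *\<^sub>R v) = c * f v"
    and ga: "\<And>v w. g (v + w) = g v + g w" and gs: "\<And>c v. g (c *\<^sub>R v) = c * g v"
    and pos: "\<And>i j k. i < j \<Longrightarrow> j < k \<Longrightarrow> \<sigma> * ori f g x i j k > 0"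
    and A: "finite A" "N \<notin> A" "a0 \<in> A" "a0 < N" "b0 \<in> A" "N < b0"
  shows "x N \<notin> convex hull (x ` A)"
proof
  assume mem: "x N \<in> convex hull (x ` A)"
  define a where "a = Max {m\<in>A. m < N}"
  define b where "b = Min {m\<in>A. N < m}"
  have fin1: "finite {m\<in>A. m < N}" "finite {m\<in>A. N < m}" using A by auto
  have ne: "{m\<in>A. m < N} \<noteq> {}" "{m\<in>A. N < m} \<noteq> {}" using A by auto
  have a: "a \<in> A" "a < N" using Max_in[OF fin1(1) ne(1)] by (auto simp: a_def)
  have b: "b \<in> A" "N < b" using Min_in[OF fin1(2) ne(2)] by (auto simp: b_def)
  have amax: "w \<le> a" if "w \<in> A" "w < N" for w using fin1 that by (auto simp: a_def)
  have bmin: "b \<le> w" if "w \<in> A" "N < w" for w using fin1 that by (auto simp: b_def)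
  define \<phi> where "\<phi> z = \<sigma> * ((f (x b) - f (x a)) * (g z - g (x a)) - (g (x b) - g (x a)) * (f z - f (x a)))" for z
  have lin: "\<phi> (c *\<^sub>R z + d *\<^sub>R w) = c * \<phi> z + d * \<phi> w" if "c + d = 1" for c d z w
  proof -
    have F: "f (c *\<^sub>R z + d *\<^sub>R w) = c * f z + d * f w" by (simp add: fa fs)
    have G: "g (c *\<^sub>R z + d *\<^sub>R w) = c * g z + d * g w" by (simp add: ga gs)
    have d: "d = 1 - c" using that by simp
    show ?thesis unfolding \<phi>_def F G unfolding d by (simp add: algebra_simps)
  qed
  have cK: "convex {z. 0 \<le> \<phi> z}"
    unfolding convex_def using lin by simp
  have "x ` A \<subseteq> {z. 0 \<le> \<phi> z}"
  proof (rule image_subsetI, rule CollectI)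
    fix w assume w: "w \<in> A"
    have "w \<noteq> N" using w A by auto
    then consider "w < a" | "w = a" | "w = b" | "b < w"
      using amax[OF w] bmin[OF w] by fastforce
    then show "0 \<le> \<phi> (x w)"
    proof cases
      case 1
      have "\<sigma> * ori f g x w a b > 0" using pos 1 a b by simp
      moreover have "\<phi> (x w) = \<sigma> * ori f g x w a b" unfolding \<phi>_def ori_def by algebra
      ultimately show ?thesis by simp
    next
      case 4
      have "\<sigma> * ori f g x a b w > 0" using pos 4 a b by simp
      then show ?thesis unfolding \<phi>_def ori_def by simp
    qed (auto simp: \<phi>_def)
  qed
  then have "convex hull (x ` A) \<subseteq> {z. 0 \<le> \<phi> z}" using cK by (rule hull_minimal)
  with mem have "0 \<le> \<phi> (x N)" by auto
  moreover have "\<sigma> * ori f g x a N b > 0" using pos a b by simp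
  moreover have "\<phi> (x N) = - (\<sigma> * ori f g x a N b)" unfolding \<phi>_def ori_def by algebra
  ultimately show False by simp
qed

lemma ci2d:
  fixes x :: "nat \<Rightarrow> 'v::real_vector" and f g :: "'v \<Rightarrow> real"
  assumes fa: "\<And>v w. f (v + w) = f v + f w" and fs: "\<And>c v. f (c *\<^sub>R v) = c * f v"
    and ga: "\<And>v w. g (v + w) = g v + g w" and gs: "\<And>c v. g (c *\<^sub>R v) = c * g v"
    and pos: "\<And>i j k. i < j \<Longrightarrow> j < k \<Longrightarrow> \<sigma> * ori f g x i j k > 0"
  shows "CI (\<lambda>n. x (Suc n))"
  unfolding CI_def
proof (intro allI impI)
  fix A :: "nat set" and n :: nat assume An: "finite A \<and> n \<notin> A"
  define M where "M = Suc (Max (insert (Suc n) (Suc ` A)))"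
  define A' where "A' = insert 0 (insert M (Suc ` A))"
  have Mgt: "m < M" if "m \<in> insert (Suc n) (Suc ` A)" for m
    using An that unfolding M_def by (simp add: le_imp_less_Suc)
  have "x (Suc n) \<notin> convex hull (x ` A')"
    apply (rule ci_core[OF fa fs ga gs pos, of A' "Suc n" 0 M])
    using An Mgt by (auto simp: A'_def)
  moreover have "convex hull ((\<lambda>n. x (Suc n)) ` A) \<subseteq> convex hull (x ` A')"
    by (rule hull_mono) (auto simp: A'_def)
  ultimately show "x (Suc n) \<notin> convex hull ((\<lambda>n. x (Suc n)) ` A)" by blast
qed

lemma sl3: "a < b \<Longrightarrow> b < c \<Longrightarrow> sorted_list_of_set {a, b, c::nat} = [a, b, c]"
  by (subst sorted_list_of_set_unique[symmetric]) auto

lemma card3: "a < b \<Longrightarrow> b < c \<Longrightarrow> card {a, b, c::nat} = 3"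
  by auto

lemma ramsey_multi:
  fixes col :: "'q \<Rightarrow> nat set \<Rightarrow> nat"
  assumes "finite Q" "infinite Z" "\<And>q T. col q T < 3"
  shows "\<exists>Y\<subseteq>Z. infinite Y \<and> (\<forall>q\<in>Q. \<exists>t. \<forall>T. T \<subseteq> Y \<and> finite T \<and> card T = 3 \<longrightarrow> col q T = t)"
  using assms(1,2)
proof (induction Q arbitrary: Z rule: finite_induct)
  case empty
  show ?case by (rule exI[of _ Z]) (simp add: empty.prems)
next
  case (insert q Q)
  from insert.IH[OF insert.prems] obtain Y1 where Y1: "Y1 \<subseteq> Z" "infinite Y1"
    "\<forall>q\<in>Q. \<exists>t. \<forall>T. T \<subseteq> Y1 \<and> finite T \<and> card T = 3 \<longrightarrow> col q T = t"
    by auto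
  have "\<forall>X. X \<subseteq> Y1 \<and> finite X \<and> card X = 3 \<longrightarrow> col q X < 3" using assms(3) by simp
  from Ramsey[OF Y1(2) this] obtain Y2 t where Y2: "Y2 \<subseteq> Y1" "infinite Y2"
    "\<forall>T. T \<subseteq> Y2 \<and> finite T \<and> card T = 3 \<longrightarrow> col q T = t"
    by auto
  show ?case
  proof (intro exI[of _ Y2] conjI ballI)
    show "Y2 \<subseteq> Z" using Y1(1) Y2(1) by (rule order_trans[rotated])
    show "infinite Y2" by (rule Y2(2))
    fix q' assume "q' \<in> insert q Q"
    then show "\<exists>t. \<forall>T. T \<subseteq> Y2 \<and> finite T \<and> card T = 3 \<longrightarrow> col q' T = t"
    proof
      assume "q' = q" then show ?thesis using Y2(3) by auto
    next
      assume "q' \<in> Q"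
      have "\<exists>t'. \<forall>T. T \<subseteq> Y1 \<and> finite T \<and> card T = 3 \<longrightarrow> col q' T = t'"
        by (rule bspec[OF Y1(3)]) fact
      then obtain t' where t': "\<forall>T. T \<subseteq> Y1 \<and> finite T \<and> card T = 3 \<longrightarrow> col q' T = t'" by (rule exE)
      show ?thesis
      proof (rule exI[of _ t'], intro allI impI)
        fix T assume "T \<subseteq> Y2 \<and> finite T \<and> card T = 3"
        then show "col q' T = t'" using t' Y2(1) by auto
      qed
    qed
  qed
qed

locale basis_ctx =
  fixes B :: "'v::real_vector set"
  assumes indB: "independent B" and spB: "span B = UNIV"
begin

definition rep :: "'v \<Rightarrow> 'v \<Rightarrow> real" where "rep v = representation B v"

lemma rep_add: "rep (u + v) b = rep u b + rep v b"
  unfolding rep_def using representation_add[OF indB, of v u] spB by simp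

lemma rep_scale: "rep (c *\<^sub>R v) b = c * rep v b"
  unfolding rep_def using representation_scale[OF indB, of v c] spB by simp

lemma rep_diff: "rep (u - v) b = rep u b - rep v b"
  unfolding rep_def using representation_diff[OF indB, of v u] spB by simp

lemma rep_sum: "rep (sum w I) b = (\<Sum>i\<in>I. rep (w i) b)"
  unfolding rep_def using representation_sum[OF indB, of I w] spB by simp

lemma rep_fin: "finite {b. rep v b \<noteq> 0}"
  unfolding rep_def by (rule finite_representation)

lemma rep_zero_imp: "(\<And>b. rep v b = 0) \<Longrightarrow> v = 0"
  using sum_nonzero_representation_eq[OF indB, of v] spB unfolding rep_def by simp

lemma rep_inj: "(\<And>b. rep u b = rep v b) \<Longrightarrow> u = v"
  using rep_zero_imp[of "u - v"] by (simp add: rep_diff)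

end

primrec Ug :: "(nat \<Rightarrow> 'b set) \<Rightarrow> nat \<Rightarrow> 'b set" where
  "Ug T 0 = {}"
| "Ug T (Suc k) = Ug T k \<union> T (SOME n. \<not> T n \<subseteq> Ug T k)"

lemma greedy:
  assumes fin: "\<And>n. finite (T n)" and ex: "\<And>W. finite W \<Longrightarrow> \<exists>n. \<not> T n \<subseteq> W"
  shows "\<not> T (SOME n. \<not> T n \<subseteq> Ug T k) \<subseteq> Ug T k"
    and "i < k \<Longrightarrow> T (SOME n. \<not> T n \<subseteq> Ug T i) \<subseteq> Ug T k"
proof -
  have finU: "finite (Ug T k)" for k by (induction k) (auto simp: fin)
  show "\<not> T (SOME n. \<not> T n \<subseteq> Ug T k) \<subseteq> Ug T k"
    by (rule someI_ex[OF ex[OF finU]])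
  show "i < k \<Longrightarrow> T (SOME n. \<not> T n \<subseteq> Ug T i) \<subseteq> Ug T k"
  proof (induction k)
    case 0 then show ?case by simp
  next
    case (Suc k)
    then show ?case by (cases "i = k") auto
  qed
qed

context basis_ctx begin

lemma indep_seq:
  fixes x :: "nat \<Rightarrow> 'v" and K :: nat and A :: "nat set"
  assumes new: "\<And>k. \<exists>b. rep (x k) b \<noteq> 0 \<and> (\<forall>i<k. rep (x i) b = 0)"
  shows "A \<subseteq> {..<K} \<Longrightarrow> (\<Sum>i\<in>A. c i *\<^sub>R x i) = 0 \<Longrightarrow> i \<in> A \<Longrightarrow> c i = 0"
proof (induction K arbitrary: A i)
  case 0 then show ?case by auto
next
  case (Suc K)
  show ?case
  proof (cases "K \<in> A")
    case False
    then have "A \<subseteq> {..<K}" using Suc.prems(1) by (auto simp: less_Suc_eq)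
    then show ?thesis using Suc.IH Suc.prems by blast
  next
    case True
    have finA: "finite A" using Suc.prems(1) finite_subset by blast
    obtain b where b: "rep (x K) b \<noteq> 0" "\<forall>i<K. rep (x i) b = 0" using new by blast
    have "0 = rep (\<Sum>i\<in>A. c i *\<^sub>R x i) b" using Suc.prems(2) rep_zero_imp rep_diff
      by (metis diff_self)
    also have "\<dots> = (\<Sum>i\<in>A. c i * rep (x i) b)" by (simp add: rep_sum rep_scale)
    also have "\<dots> = c K * rep (x K) b + (\<Sum>i\<in>A - {K}. c i * rep (x i) b)"
      using True finA by (simp add: sum.remove)
    also have "(\<Sum>i\<in>A - {K}. c i * rep (x i) b) = 0"
    proof (rule sum.neutral, rule ballI)
      fix i assume "i \<in> A - {K}"
      then have "i < K" using Suc.prems(1) by (auto simp: less_Suc_eq)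
      then show "c i * rep (x i) b = 0" using b by simp
    qed
    finally have cK: "c K = 0" using b by simp
    have "(\<Sum>i\<in>A - {K}. c i *\<^sub>R x i) = (\<Sum>i\<in>A. c i *\<^sub>R x i)"
      using True finA cK by (simp add: sum.remove)
    then have s0: "(\<Sum>i\<in>A - {K}. c i *\<^sub>R x i) = 0" using Suc.prems(2) by simp
    have sub: "A - {K} \<subseteq> {..<K}" using Suc.prems(1) by (auto simp: less_Suc_eq)
    show ?thesis
    proof (cases "i = K")
      case True then show ?thesis using cK by simp
    next
      case False then show ?thesis using Suc.IH[OF sub s0] Suc.prems(3) by blast
    qed
  qed
qed

lemma ci_from_indep:
  fixes x :: "nat \<Rightarrow> 'v"
  assumes new: "\<And>k. \<exists>b. rep (x k) b \<noteq> 0 \<and> (\<forall>i<k. rep (x i) b = 0)"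
  shows "CI x"
  unfolding CI_def
proof (intro allI impI notI)
  fix A :: "nat set" and n :: nat
  assume An: "finite A \<and> n \<notin> A" and mem: "x n \<in> convex hull (x ` A)"
  have injx: "inj x"
  proof (rule injI, rule ccontr)
    fix i j assume eq: "x i = x j" and ne: "i \<noteq> j"
    have "x i \<noteq> x j" if "i < j" for i j
    proof -
      obtain b where "rep (x j) b \<noteq> 0" "\<forall>i<j. rep (x i) b = 0" using new by blast
      then show ?thesis using that by auto
    qed
    then show False using eq ne by (metis linorder_neqE_nat)
  qed
  have finx: "finite (x ` A)" using An by simp
  obtain u where u: "\<forall>w\<in>x ` A. 0 \<le> u w" "sum u (x ` A) = 1" "(\<Sum>w\<in>x ` A. u w *\<^sub>R w) = x n"
    using mem unfolding convex_hull_finite[OF finx] by blast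
  have "(\<Sum>w\<in>x ` A. u w *\<^sub>R w) = (\<Sum>i\<in>A. u (x i) *\<^sub>R x i)"
    using injx by (subst sum.reindex) (auto intro: inj_on_subset)
  with u(3) have sA: "(\<Sum>i\<in>A. u (x i) *\<^sub>R x i) = x n" by simp
  define c where "c i = (if i = n then -1 else u (x i))" for i
  have "(\<Sum>i\<in>insert n A. c i *\<^sub>R x i) = c n *\<^sub>R x n + (\<Sum>i\<in>A. c i *\<^sub>R x i)"
    using An by (simp add: sum.insert)
  also have "(\<Sum>i\<in>A. c i *\<^sub>R x i) = (\<Sum>i\<in>A. u (x i) *\<^sub>R x i)"
    using An by (intro sum.cong) (auto simp: c_def)
  finally have s0: "(\<Sum>i\<in>insert n A. c i *\<^sub>R x i) = 0" using sA by (simp add: c_def)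
  have sub: "insert n A \<subseteq> {..<Suc (Max (insert n A))}"
    using An by (auto simp: le_imp_less_Suc)
  have "c n = 0" by (rule indep_seq[OF new sub s0]) simp
  then show False by (simp add: c_def)
qed

end

definition code :: "real \<Rightarrow> nat" where
  "code r = (if 0 < r then 0 else if r < 0 then 1 else 2)"

lemma code_lt: "code r < 3" by (simp add: code_def)

context basis_ctx begin

lemma collinear_from_ori:
  fixes x :: "nat \<Rightarrow> 'v"
  assumes ne: "x j \<noteq> x i" and z: "\<And>b b'. ori (\<lambda>v. rep v b) (\<lambda>v. rep v b') x i j k = 0"
  shows "\<exists>t. x k - x i = t *\<^sub>R (x j - x i)"
proof -
  obtain b0 where b0: "rep (x j - x i) b0 \<noteq> 0"
    using rep_zero_imp[of "x j - x i"] ne by auto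
  define d where "d b = rep (x j) b - rep (x i) b" for b
  define e where "e b = rep (x k) b - rep (x i) b" for b
  have d0: "d b0 \<noteq> 0" using b0 by (simp add: d_def rep_diff)
  define t where "t = e b0 / d b0"
  have "rep (x k - x i) b = rep (t *\<^sub>R (x j - x i)) b" for b
  proof -
    have "d b0 * e b - d b * e b0 = 0" using z[of b0 b] by (simp add: ori_def d_def e_def)
    then have "e b = t * d b" using d0 by (simp add: t_def field_simps)
    then show ?thesis by (simp add: rep_diff rep_scale d_def e_def)
  qed
  then have "x k - x i = t *\<^sub>R (x j - x i)" by (rule rep_inj)
  then show ?thesis by blast
qed

end

lemma lin_from_col:
  fixes x :: "nat \<Rightarrow> 'v::real_vector"
  assumes injx: "inj x" and col: "\<And>k. \<exists>t. x k - x 0 = t *\<^sub>R (x 1 - x 0)"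
  shows "\<exists>g::nat\<Rightarrow>nat. LIN (\<lambda>n. x (g n))"
proof -
  define u where "u = x 1 - x 0"
  have u: "u \<noteq> 0"
  proof
    assume "u = 0" then have "x 1 = x 0" unfolding u_def by simp
    with injx have "(1::nat) = 0" by (rule injD)
    then show False by simp
  qed
  define \<tau> where "\<tau> k = (SOME t. x k - x 0 = t *\<^sub>R u)" for k
  have xe: "x k = x 0 + \<tau> k *\<^sub>R u" for k
  proof -
    have "x k - x 0 = \<tau> k *\<^sub>R u" unfolding \<tau>_def u_def by (rule someI_ex[OF col])
    then show ?thesis by (simp add: algebra_simps)
  qed
  have injt: "inj \<tau>"
  proof (rule injI)
    fix i j assume "\<tau> i = \<tau> j" then have "x i = x j" using xe[of i] xe[of j] by simp
    with injx show "i = j" by (rule injD)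
  qed
  obtain g where g: "strict_mono g" "monoseq (\<lambda>n. \<tau> (g n))" using seq_monosub by blast
  have ne: "\<tau> (g m) \<noteq> \<tau> (g n)" if "m < n" for m n
  proof
    assume "\<tau> (g m) = \<tau> (g n)"
    with injt have "g m = g n" by (rule injD)
    moreover have "g m < g n" using g(1) that by (rule strict_monoD)
    ultimately show False by simp
  qed
  from g(2) consider "\<forall>m. \<forall>n\<ge>m. \<tau> (g m) \<le> \<tau> (g n)" | "\<forall>m. \<forall>n\<ge>m. \<tau> (g n) \<le> \<tau> (g m)"
    unfolding monoseq_def by blast
  then show ?thesis
  proof cases
    case 1
    have "strict_mono (\<lambda>n. \<tau> (g n))"
    proof (rule strict_monoI)
      fix m n :: nat assume mn: "m < n"
      then have "\<tau> (g m) \<le> \<tau> (g n)" using 1 by simp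
      with ne[OF mn] show "\<tau> (g m) < \<tau> (g n)" by simp
    qed
    then have "LIN (\<lambda>n. x (g n))" unfolding LIN_def
      by (intro exI[of _ "x 0"] exI[of _ u] exI[of _ "\<lambda>n. \<tau> (g n)"] conjI u allI xe)
    then show ?thesis by blast
  next
    case 2
    have "strict_mono (\<lambda>n. - \<tau> (g n))"
    proof (rule strict_monoI)
      fix m n :: nat assume mn: "m < n"
      then have "\<tau> (g n) \<le> \<tau> (g m)" using 2 by simp
      with ne[OF mn] show "- \<tau> (g m) < - \<tau> (g n)" by simp
    qed
    moreover have "x (g n) = x 0 + (- \<tau> (g n)) *\<^sub>R (- u)" for n using xe[of "g n"] by simp
    moreover have "- u \<noteq> 0" using u by simp
    ultimately have "LIN (\<lambda>n. x (g n))" unfolding LIN_def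
      by (intro exI[of _ "x 0"] exI[of _ "- u"] exI[of _ "\<lambda>n. - \<tau> (g n)"] conjI allI) auto
    then show ?thesis by blast
  qed
qed

lemma geom:
  fixes X :: "'v::real_vector set"
  assumes "infinite X"
  shows "\<exists>x. (\<forall>n. x n \<in> X) \<and> (CI x \<or> LIN x)"
proof -
  obtain y :: "nat \<Rightarrow> 'v" where y: "inj y" "range y \<subseteq> X"
    using infinite_countable_subset[OF assms] by blast
  obtain B :: "'v set" where B: "independent B" "UNIV \<subseteq> span B"
    using real_vector.maximal_independent_subset[of UNIV] by blast
  interpret basis_ctx B using B by unfold_locales auto
  define T where "T n = {b. rep (y n) b \<noteq> 0}" for n
  have finT: "finite (T n)" for n using rep_fin by (simp add: T_def)
  show ?thesis
  proof (cases "\<exists>W. finite W \<and> (\<forall>n. T n \<subseteq> W)")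
    case False
    then have ex: "\<And>W. finite W \<Longrightarrow> \<exists>n. \<not> T n \<subseteq> W" by blast
    define s where "s k = (SOME n. \<not> T n \<subseteq> Ug T k)" for k
    have new: "\<exists>b. rep (y (s k)) b \<noteq> 0 \<and> (\<forall>i<k. rep (y (s i)) b = 0)" for k
    proof -
      from greedy(1)[OF finT ex, of k] obtain b where b: "b \<in> T (s k)" "b \<notin> Ug T k"
        unfolding s_def by blast
      have "rep (y (s i)) b = 0" if "i < k" for i
        using greedy(2)[OF finT ex that] b(2) unfolding s_def T_def by blast
      then show ?thesis using b(1) unfolding T_def by blast
    qed
    have "CI (\<lambda>k. y (s k))" by (rule ci_from_indep) (rule new)
    moreover have "\<forall>n. y (s n) \<in> X" using y(2) by auto
    ultimately show ?thesis by (intro exI[of _ "\<lambda>k. y (s k)"]) simp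
  next
    case True
    then obtain W where W: "finite W" "\<And>n. T n \<subseteq> W" by blast
    have zero: "rep (y n) b = 0" if "b \<notin> W" for n b using W(2)[of n] that unfolding T_def by blast
    define col where "col q S = (let l = sorted_list_of_set S in
       code (ori (\<lambda>v. rep v (fst q)) (\<lambda>v. rep v (snd q)) y (l!0) (l!1) (l!2)))" for q S
    have colb: "col q S < 3" for q S by (simp add: col_def Let_def code_lt)
    have "\<exists>Y\<subseteq>UNIV. infinite Y \<and> (\<forall>q\<in>W\<times>W. \<exists>t. \<forall>S. S \<subseteq> Y \<and> finite S \<and> card S = 3 \<longrightarrow> col q S = t)"
      by (rule ramsey_multi[OF finite_cartesian_product[OF W(1) W(1)] infinite_UNIV_nat colb])
    then obtain Y where Y: "infinite Y" "\<forall>q\<in>W\<times>W. \<exists>t. \<forall>S. S \<subseteq> Y \<and> finite S \<and> card S = 3 \<longrightarrow> col q S = t"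
      by (elim exE conjE)
    define e where "e = enumerate Y"
    define x where "x n = y (e n)" for n
    have homog: "\<exists>t. \<forall>i j k. i < j \<longrightarrow> j < k \<longrightarrow> code (ori (\<lambda>v. rep v b) (\<lambda>v. rep v b') x i j k) = t"
      if "b \<in> W" "b' \<in> W" for b b'
    proof -
      have bb: "(b, b') \<in> W \<times> W" using that by simp
      from bspec[OF Y(2) bb] obtain t where t: "\<forall>S. S \<subseteq> Y \<and> finite S \<and> card S = 3 \<longrightarrow> col (b, b') S = t"
        by (elim exE)
      have "code (ori (\<lambda>v. rep v b) (\<lambda>v. rep v b') x i j k) = t" if "i < j" "j < k" for i j k
      proof -
        have lt: "e i < e j" "e j < e k" using that Y(1) by (simp_all add: e_def enumerate_mono)
        have sub: "{e i, e j, e k} \<subseteq> Y" using Y(1) by (simp add: e_def enumerate_in_set)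
        have fin3: "finite {e i, e j, e k}" by simp
        have "col (b, b') {e i, e j, e k} = t" using t sub fin3 card3[OF lt] by blast
        then show ?thesis by (simp add: col_def sl3[OF lt] ori_def x_def)
      qed
      then show ?thesis by blast
    qed
    have sme: "strict_mono e" unfolding e_def using Y(1) by (rule strict_mono_enumerate)
    have injx: "inj x"
    proof (rule injI)
      fix i j assume "x i = x j"
      then have "y (e i) = y (e j)" by (simp add: x_def)
      with y(1) have "e i = e j" by (rule injD)
      then show "i = j" using sme by (simp add: strict_mono_eq)
    qed
    have xX: "x n \<in> X" for n using y(2) by (auto simp: x_def)
    show ?thesis
    proof (cases "\<exists>b\<in>W. \<exists>b'\<in>W. \<exists>i j k. i < j \<and> j < k \<and> ori (\<lambda>v. rep v b) (\<lambda>v. rep v b') x i j k \<noteq> 0")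
      case True
      then obtain b b' i0 j0 k0 where bb: "b \<in> W" "b' \<in> W" "i0 < j0" "j0 < k0"
        "ori (\<lambda>v. rep v b) (\<lambda>v. rep v b') x i0 j0 k0 \<noteq> 0" by blast
      obtain t where t: "\<forall>i j k. i < j \<longrightarrow> j < k \<longrightarrow> code (ori (\<lambda>v. rep v b) (\<lambda>v. rep v b') x i j k) = t"
        using homog[OF bb(1,2)] by blast
      define \<sigma> where "\<sigma> = (if t = 0 then 1 else -1 :: real)"
      have "code (ori (\<lambda>v. rep v b) (\<lambda>v. rep v b') x i0 j0 k0) = t" using t bb(3,4) by blast
      then have t2: "t \<noteq> 2" using bb(5) by (auto simp: code_def split: if_splits)
      have pos: "\<sigma> * ori (\<lambda>v. rep v b) (\<lambda>v. rep v b') x i j k > 0" if "i < j" "j < k" for i j k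
      proof -
        have "code (ori (\<lambda>v. rep v b) (\<lambda>v. rep v b') x i j k) = t" using t that by blast
        then show ?thesis using t2 by (auto simp: code_def \<sigma>_def split: if_splits)
      qed
      have "CI (\<lambda>n. x (Suc n))"
        by (rule ci2d[where f="\<lambda>v. rep v b" and g = "\<lambda>v. rep v b'", OF _ _ _ _ pos])
          (simp_all add: rep_add rep_scale)
      then show ?thesis using xX by (intro exI[of _ "\<lambda>n. x (Suc n)"]) simp
    next
      case False
      have oz: "ori (\<lambda>v. rep v b) (\<lambda>v. rep v b') x i j k = 0" if "i < j" "j < k" for b b' i j k
      proof (cases "b \<in> W \<and> b' \<in> W")
        case True then show ?thesis using False that by blast
      next
        case False then show ?thesis using zero by (auto simp: ori_def x_def)
      qed
      have col: "\<exists>t. x k - x 0 = t *\<^sub>R (x 1 - x 0)" for k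
      proof -
        consider "k = 0" | "k = 1" | "1 < k" by linarith
        then show ?thesis
        proof cases
          case 1 then show ?thesis by (intro exI[of _ 0]) simp
        next
          case 2 then show ?thesis by (intro exI[of _ 1]) simp
        next
          case 3
          have ne: "x 1 \<noteq> x 0"
          proof
            assume "x 1 = x 0"
            with injx have "(1::nat) = 0" by (rule injD)
            then show False by simp
          qed
          show ?thesis by (rule collinear_from_ori[OF ne]) (rule oz, simp, rule 3)
        qed
      qed
      obtain g where "LIN (\<lambda>n. x (g n))" using lin_from_col[OF injx col] by blast
      then show ?thesis using xX by (intro exI[of _ "\<lambda>n. x (g n)"]) auto
    qed
  qed
qed

theorem corollary5p4:
  fixes X :: "'v::real_vector set"
  assumes "infinite X"
  shows "(\<exists>h. join_embedding fin_intervals_nat interval_join (Co_compact X) (Co_join X) h)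
       \<or> (\<exists>h. join_embedding fin_subsets_nat (\<union>) (Co_compact X) (Co_join X) h)"
proof -
  obtain x where x: "\<And>n. x n \<in> X" and c: "CI x \<or> LIN x" using geom[OF assms] by blast
  from c show ?thesis
  proof
    assume "CI x" then show ?thesis using embP[of x X, OF x] by blast
  next
    assume "LIN x" then show ?thesis using embI[of x X, OF x] by blast
  qed
qed

end
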